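(* Let $A$ be a set of regular cardinals and let $\lambda\in\operatorname{spec}(A)$. Then either $\lambda\leq\operatorname{cf}(\prod A/J_{\mathrm{bd}})$, or $\lambda\in\operatorname{spec}(\bar A)$ for some proper initial segment $\bar A$ of $A$. In particular, if $\lambda\in\operatorname{spec}^*(A)$, then $\lambda\leq\operatorname{cf}(\prod A/J_{\mathrm{bd}})$.
   Context: $\prod A$ is the set of functions $f$ on $A$ with $f(a)\in a$, ordered pointwise. $J_{\mathrm{bd}}$ is the ideal of bounded subsets of $A$; $\operatorname{cf}(\prod A/J_{\mathrm{bd}})$ is the least size of a family $\mathcal{C}\subseteq\prod A$ such that every $h\in\prod A$ satisfies $h<f$ modulo $J_{\mathrm{bd}}$ (i.e., $\{a:h(a)\geq f(a)\}\in J_{\mathrm{bd}}$) for some $f\in\mathcal{C}$. $\operatorname{spec}(B)$, for a set $B$ of regular cardinals, is the set of regular $\kappa$ for which some $\mathcal{F}\subseteq\prod B$ of size $\kappa$ has every $\kappa$-sized subset unbounded in $(\prod B,<)$ (equivalently, $(\prod B,<)\geq_T\kappa$ in the Tukey order). For $\mathcal{G}\subseteq\prod A$, $\operatorname{ub}(\mathcal{G})$ is the set of $a\in A$ with $\{f(a):f\in\mathcal{G}\}$ unbounded in $a$. $\operatorname{spec}^*(A)$ is the set of regular $\lambda$ such that there is $\mathcal{F}\subseteq\prod A$ of size $\lambda$ with $\operatorname{ub}(\mathcal{F}_0)$ unbounded in $\sup(A)$ for every $\lambda$-sized $\mathcal{F}_0\subseteq\mathcal{F}$. *)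

theory Defs
  imports Main "HOL-Library.FuncSet"
begin

text \<open>Ordinals are modelled as elements of an arbitrary well-ordered type 'k;
  an ordinal a is identified with the set of its predecessors {x. x < a}.\<close>

definition below :: "'k::wellorder \<Rightarrow> 'k set" where
  "below a = {x. x < a}"

definition card_le :: "'a set \<Rightarrow> 'b set \<Rightarrow> bool" where
  "card_le X Y \<longleftrightarrow> (\<exists>f. inj_on f X \<and> f ` X \<subseteq> Y)"

definition same_card :: "'a set \<Rightarrow> 'b set \<Rightarrow> bool" where
  "same_card X Y \<longleftrightarrow> (\<exists>f. bij_betw f X Y)"

definition is_cardinal :: "'k::wellorder \<Rightarrow> bool" where
  "is_cardinal k \<longleftrightarrow> (\<forall>b<k. \<not> same_card (below b) (below k))"

definition regular :: "'k::wellorder \<Rightarrow> bool" where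
  "regular k \<longleftrightarrow> is_cardinal k \<and> infinite (below k) \<and>
     (\<forall>S \<subseteq> below k. (\<forall>x<k. \<exists>y\<in>S. x \<le> y) \<longrightarrow> card_le (below k) S)"

definition prodA :: "'k::wellorder set \<Rightarrow> ('k \<Rightarrow> 'k) set" where
  "prodA A = (\<Pi>\<^sub>E a\<in>A. below a)"

text \<open>Bounded subsets of A (the ideal J_bd): X is bounded below sup A.\<close>
definition bdd_in :: "'k::wellorder set \<Rightarrow> 'k set \<Rightarrow> bool" where
  "bdd_in A X \<longleftrightarrow> (\<exists>a\<in>A. \<forall>x\<in>X. x < a)"

definition bounded_in_prod :: "'k::wellorder set \<Rightarrow> ('k \<Rightarrow> 'k) set \<Rightarrow> bool" where
  "bounded_in_prod B F \<longleftrightarrow> (\<exists>g\<in>prodA B. \<forall>f\<in>F. \<forall>b\<in>B. f b < g b)"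

definition spec :: "'k::wellorder set \<Rightarrow> 'k set" where
  "spec B = {k. regular k \<and> (\<exists>F \<subseteq> prodA B. same_card F (below k) \<and>
       (\<forall>G \<subseteq> F. same_card G (below k) \<longrightarrow> \<not> bounded_in_prod B G))}"

definition ub :: "'k::wellorder set \<Rightarrow> ('k \<Rightarrow> 'k) set \<Rightarrow> 'k set" where
  "ub A G = {a\<in>A. \<forall>x<a. \<exists>f\<in>G. x \<le> f a}"

definition spec_star :: "'k::wellorder set \<Rightarrow> 'k set" where
  "spec_star A = {l. regular l \<and> (\<exists>F \<subseteq> prodA A. same_card F (below l) \<and>
       (\<forall>F0 \<subseteq> F. same_card F0 (below l) \<longrightarrow> \<not> bdd_in A (ub A F0)))}"

text \<open>C is cofinal in \<Pi>A/J_bd: every h is below some f \<in> C modulo J_bd.\<close>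
definition cofinal_mod_bd :: "'k::wellorder set \<Rightarrow> ('k \<Rightarrow> 'k) set \<Rightarrow> bool" where
  "cofinal_mod_bd A C \<longleftrightarrow> C \<subseteq> prodA A \<and>
     (\<forall>h\<in>prodA A. \<exists>f\<in>C. bdd_in A {a\<in>A. h a \<ge> f a})"

text \<open>l \<le> cf(\<Pi>A/J_bd): every cofinal family has size at least l.\<close>
definition le_cf_bd :: "'k::wellorder \<Rightarrow> 'k set \<Rightarrow> bool" where
  "le_cf_bd l A \<longleftrightarrow> (\<forall>C. cofinal_mod_bd A C \<longrightarrow> card_le (below l) C)"

definition proper_initial_segment :: "'k::wellorder set \<Rightarrow> 'k set \<Rightarrow> bool" where
  "proper_initial_segment B A \<longleftrightarrow> B \<subseteq> A \<and> B \<noteq> A \<and>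
     (\<forall>b\<in>B. \<forall>a\<in>A. a < b \<longrightarrow> a \<in> B)"

end

theory Submission
  imports Defs
begin
lemma cl_total: "card_le X Y \<or> card_le Y X"
  unfolding card_le_def card_of_ordLeq
  using ordLeq_total[OF card_of_Well_order card_of_Well_order] by blast

lemma cl_SB: "card_le X Y \<Longrightarrow> card_le Y X \<Longrightarrow> same_card X Y"
  unfolding card_le_def same_card_def
proof (elim exE conjE)
  fix f g assume "inj_on f X" "f ` X \<subseteq> Y" "inj_on g Y" "g ` Y \<subseteq> X"
  from Schroeder_Bernstein[OF this] show "\<exists>h. bij_betw h X Y" .
qed

lemma cl_trans: "card_le X Y \<Longrightarrow> card_le Y Z \<Longrightarrow> card_le X Z"
  unfolding card_le_def
proof (elim exE conjE)
  fix f g assume "inj_on f X" "f ` X \<subseteq> Y" "inj_on g Y" "g ` Y \<subseteq> Z"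
  then show "\<exists>h. inj_on h X \<and> h ` X \<subseteq> Z"
    by (intro exI[of _ "g \<circ> f"]) (auto simp: comp_inj_on inj_on_subset)
qed

lemma cl_subset: "X \<subseteq> Y \<Longrightarrow> card_le X Y"
  unfolding card_le_def by (intro exI[of _ id]) auto

lemma cl_image: "card_le (f ` X) X"
  unfolding card_le_def by (intro exI[of _ "inv_into X f"]) (auto simp: inj_on_inv_into inv_into_into)

lemma cl_inj: "inj_on f X \<Longrightarrow> f ` X \<subseteq> Y \<Longrightarrow> card_le X Y"
  unfolding card_le_def by blast

lemma sc_cl1: "same_card X Y \<Longrightarrow> card_le X Y"
  unfolding card_le_def same_card_def bij_betw_def by blast

lemma sc_sym: "same_card X Y \<Longrightarrow> same_card Y X"
  unfolding same_card_def using bij_betw_inv_into by blast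

lemma sc_cl2: "same_card X Y \<Longrightarrow> card_le Y X"
  using sc_cl1 sc_sym by blast

lemma sc_trans: "same_card X Y \<Longrightarrow> same_card Y Z \<Longrightarrow> same_card X Z"
  unfolding same_card_def using bij_betw_trans by blast

lemma cl_not_image: "\<not> card_le Y X \<Longrightarrow> \<not> card_le Y (f ` X)"
  using cl_trans[OF _ cl_image[of f X], of Y] by blast

lemma regular_limit:
  fixes a :: "'k::wellorder"
  assumes "regular a" "x < a" shows "\<exists>y. x < y \<and> y < a"
proof (rule ccontr)
  assume "\<not> ?thesis"
  hence nb: "\<And>z. z < a \<Longrightarrow> z \<le> x" using not_less by blast
  have eq: "below a = below x \<union> {x}"
  proof
    show "below a \<subseteq> below x \<union> {x}" using nb unfolding below_def by (auto simp: le_less)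
    show "below x \<union> {x} \<subseteq> below a" using assms(2) unfolding below_def by auto
  qed
  have inf: "infinite (below a)" "is_cardinal a" using assms(1) unfolding regular_def by auto
  hence "infinite (below x)" using eq by auto
  then obtain h where "bij_betw h (below x) (below x \<union> {x})" using infinite_imp_bij_betw2[of "below x" x] by blast
  hence "same_card (below x) (below a)" using eq unfolding same_card_def by auto
  thus False using inf(2) assms(2) unfolding is_cardinal_def by blast
qed

lemma regular_nonempty: "regular (a::'k::wellorder) \<Longrightarrow> \<exists>z. z < a"
  unfolding regular_def below_def by (metis (no_types, lifting) Collect_empty_eq finite.emptyI)

lemma regular_bounded:
  fixes l :: "'k::wellorder"
  assumes "regular l" "S \<subseteq> below l" "\<not> card_le (below l) S"
  shows "\<exists>b<l. \<forall>s\<in>S. s < b"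
  using assms unfolding regular_def by (meson not_le)

lemma cardinal_le:
  fixes a :: "'k::wellorder"
  assumes "is_cardinal a" "card_le (below a) (below x)" shows "a \<le> x"
proof (rule ccontr)
  assume "\<not> a \<le> x" hence "x < a" by simp
  hence "card_le (below x) (below a)" by (intro cl_subset) (auto simp: below_def)
  hence "same_card (below x) (below a)" using assms(2) cl_SB by blast
  thus False using assms(1) \<open>x < a\<close> unfolding is_cardinal_def by blast
qed

lemma pigeon:
  fixes l :: "'k::wellorder"
  assumes reg: "regular l" and sc: "same_card F (below l)"
    and g: "\<forall>f\<in>F. g f \<in> X" and X: "\<not> card_le (below l) X"
  shows "\<exists>x\<in>X. same_card {f\<in>F. g f = x} (below l)"
proof (rule ccontr)
  assume nc: "\<not> ?thesis"
  obtain \<phi> where phi: "bij_betw \<phi> F (below l)" using sc unfolding same_card_def by blast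
  have small: "\<not> card_le (below l) {f\<in>F. g f = x}" if "x \<in> X" for x
  proof
    assume "card_le (below l) {f\<in>F. g f = x}"
    moreover have "card_le {f\<in>F. g f = x} (below l)"
      by (rule cl_trans[OF cl_subset sc_cl1[OF sc]]) blast
    ultimately have "same_card {f\<in>F. g f = x} (below l)" by (rule cl_SB[rotated])
    thus False using nc that by blast
  qed
  have "\<forall>x\<in>X. \<exists>b. b<l \<and> (\<forall>s\<in>\<phi> ` {f\<in>F. g f = x}. s < b)"
  proof
    fix x assume that: "x \<in> X"
    show "\<exists>b. b<l \<and> (\<forall>s\<in>\<phi> ` {f\<in>F. g f = x}. s < b)"
  proof (rule regular_bounded[OF reg])
    show "\<phi> ` {f \<in> F. g f = x} \<subseteq> below l" using phi unfolding bij_betw_def by auto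
    show "\<not> card_le (below l) (\<phi> ` {f \<in> F. g f = x})"
      using small[OF that] by (rule cl_not_image)
  qed
  qed
  then obtain \<beta> where beta0: "\<forall>x\<in>X. \<beta> x < l \<and> (\<forall>s\<in>\<phi> ` {f\<in>F. g f = x}. s < \<beta> x)"
    by (rule bchoice[THEN exE])
  hence beta: "\<And>x. x \<in> X \<Longrightarrow> \<beta> x < l \<and> (\<forall>s\<in>\<phi> ` {f\<in>F. g f = x}. s < \<beta> x)" by blast
  have "\<exists>b<l. \<forall>s\<in>\<beta> ` X. s < b"
  proof (rule regular_bounded[OF reg])
    show "\<beta> ` X \<subseteq> below l" using beta by (auto simp: below_def)
    show "\<not> card_le (below l) (\<beta> ` X)" using X by (rule cl_not_image)
  qed
  then obtain \<gamma> where gam: "\<gamma> < l" "\<forall>x\<in>X. \<beta> x < \<gamma>" by auto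
  then have "\<gamma> \<in> \<phi> ` F" using phi unfolding bij_betw_def below_def by auto
  then obtain f where f: "f \<in> F" "\<phi> f = \<gamma>" by auto
  have "g f \<in> X" using g f by auto
  have "f \<in> {f'\<in>F. g f' = g f}" using f(1) by simp
  hence "\<phi> f < \<beta> (g f)" using beta[OF \<open>g f \<in> X\<close>] by blast
  moreover have "\<beta> (g f) < \<gamma>" using gam(2) \<open>g f \<in> X\<close> by blast
  ultimately show False using f(2) by (metis less_asym)
qed

lemma boundA:
  fixes l :: "'k::wellorder" and A :: "'k set"
  assumes regA: "\<forall>a\<in>A. regular a" and reg: "regular l"
    and cof: "cofinal_mod_bd A C" and nC: "\<not> card_le (below l) C"
  shows "\<not> card_le (below l) A"
proof -
  have cl: "is_cardinal l" using reg regular_def by blast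
  have "card_le C (below l)" using nC cl_total by blast
  then obtain e where e: "inj_on e C" "e ` C \<subseteq> below l" unfolding card_le_def by blast
  have "\<not> card_le (below l) (e ` C)" using nC by (rule cl_not_image)
  then obtain x where x: "x < l" "\<forall>b\<in>e ` C. b < x" using regular_bounded[OF reg e(2)] by blast
  define P where "P a \<longleftrightarrow> (\<forall>z<a. \<exists>c'\<in>C. z \<le> c' a)" for a
  have CA: "C \<subseteq> prodA A" using cof cofinal_mod_bd_def by blast
  have claim1: "a \<le> x" if a: "a \<in> A" "P a" for a
  proof -
    have ra: "regular a" using regA a by blast
    have S: "(\<lambda>c'. c' a) ` C \<subseteq> below a" using CA a(1) by (auto simp: prodA_def below_def PiE_def Pi_def)
    have cofS: "\<forall>z<a. \<exists>y\<in>(\<lambda>c'. c' a) ` C. z \<le> y" using a(2) unfolding P_def by blast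
    have "card_le (below a) ((\<lambda>c'. c' a) ` C)"
      using ra S cofS unfolding regular_def by (meson order.refl)
    moreover have "card_le C (below x)" using e x by (intro cl_inj[OF e(1)]) (auto simp: below_def)
    ultimately have "card_le (below a) (below x)" by (meson cl_trans cl_image)
    moreover have "is_cardinal a" using ra regular_def by blast
    ultimately show ?thesis using cardinal_le by blast
  qed
  define h where "h = restrict (\<lambda>a. SOME z. z < a \<and> (\<not> P a \<longrightarrow> (\<forall>c'\<in>C. c' a < z))) A"
  have hprop: "h a < a \<and> (\<not> P a \<longrightarrow> (\<forall>c'\<in>C. c' a < h a))" if "a \<in> A" for a
  proof -
    have "\<exists>z. z < a \<and> (\<not> P a \<longrightarrow> (\<forall>c'\<in>C. c' a < z))"
    proof (cases "P a")
      case True then show ?thesis using regular_nonempty regA that by blast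
    next
      case False then show ?thesis unfolding P_def by (auto simp: not_le)
    qed
    hence "(SOME z. z < a \<and> (\<not> P a \<longrightarrow> (\<forall>c'\<in>C. c' a < z))) < a \<and> (\<not> P a \<longrightarrow> (\<forall>c'\<in>C. c' a < (SOME z. z < a \<and> (\<not> P a \<longrightarrow> (\<forall>c'\<in>C. c' a < z)))))"
      by (rule someI_ex)
    thus ?thesis unfolding h_def using that by simp
  qed
  have "h \<in> prodA A"
  proof -
    have "\<forall>a\<in>A. h a \<in> below a" using hprop by (simp add: below_def)
    moreover have "h \<in> extensional A" unfolding h_def by simp
    ultimately show ?thesis unfolding prodA_def by (simp add: PiE_iff)
  qed
  then obtain c a0 where c: "c \<in> C" "a0 \<in> A" "\<forall>a\<in>{a\<in>A. h a \<ge> c a}. a < a0"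
    using cof unfolding cofinal_mod_bd_def bdd_in_def by blast
  have Pa: "P a" if "a \<in> A" "a0 \<le> a" for a
  proof (rule ccontr)
    assume "\<not> P a"
    hence "c a < h a" using hprop[OF that(1)] c(1) by blast
    hence "a < a0" using c(3) that(1) by auto
    thus False using that(2) by simp
  qed
  have "\<forall>a\<in>A. a \<le> x"
  proof
    fix a assume "a \<in> A"
    show "a \<le> x"
    proof (cases "a0 \<le> a")
      case True then show ?thesis using claim1 Pa \<open>a \<in> A\<close> by blast
    next
      case False then show ?thesis using claim1[OF c(2) Pa[OF c(2)]] by simp
    qed
  qed
  obtain y where y: "x < y" "y < l" using regular_limit[OF reg x(1)] by blast
  have "A \<subseteq> below y" using \<open>\<forall>a\<in>A. a \<le> x\<close> y by (auto simp: below_def)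
  show ?thesis
  proof
    assume "card_le (below l) A"
    hence "card_le (below l) (below y)" using cl_trans[OF _ cl_subset[OF \<open>A \<subseteq> below y\<close>]] by blast
    moreover have "card_le (below y) (below l)" using y by (intro cl_subset) (auto simp: below_def)
    ultimately have "same_card (below y) (below l)" by (rule cl_SB[rotated])
    thus False using cl y(2) unfolding is_cardinal_def by blast
  qed
qed

lemma get_G:
  fixes l :: "'k::wellorder" and A :: "'k set"
  assumes regA: "\<forall>a\<in>A. regular a" and reg: "regular l"
    and scF: "same_card F (below l)" and FA: "F \<subseteq> prodA A"
    and cof: "cofinal_mod_bd A C" and nC: "\<not> card_le (below l) C"
  shows "\<exists>G c a. G \<subseteq> F \<and> same_card G (below l) \<and> c \<in> prodA A \<and> a \<in> A \<and>
           (\<forall>f\<in>G. \<forall>x\<in>A. a \<le> x \<longrightarrow> f x < c x)"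
proof -
  have "\<forall>f\<in>F. \<exists>p. fst p \<in> C \<and> snd p \<in> A \<and> (\<forall>x\<in>A. fst p x \<le> f x \<longrightarrow> x < snd p)"
  proof
    fix f assume "f \<in> F"
    hence "f \<in> prodA A" using FA by blast
    then obtain c where "c \<in> C" "bdd_in A {a\<in>A. f a \<ge> c a}" using cof unfolding cofinal_mod_bd_def by blast
    then obtain a where "a \<in> A" "\<forall>x\<in>{a\<in>A. f a \<ge> c a}. x < a" unfolding bdd_in_def by blast
    thus "\<exists>p. fst p \<in> C \<and> snd p \<in> A \<and> (\<forall>x\<in>A. fst p x \<le> f x \<longrightarrow> x < snd p)"
      using \<open>c \<in> C\<close> by (intro exI[of _ "(c, a)"]) auto
  qed
  then obtain p where p: "\<forall>f\<in>F. fst (p f) \<in> C \<and> snd (p f) \<in> A \<and> (\<forall>x\<in>A. fst (p f) x \<le> f x \<longrightarrow> x < snd (p f))"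
    by (rule bchoice[THEN exE])
  have "\<forall>f\<in>F. fst (p f) \<in> C" using p by blast
  from pigeon[OF reg scF this nC] obtain c where c: "c \<in> C" "same_card {f\<in>F. fst (p f) = c} (below l)"
    by blast
  have nA: "\<not> card_le (below l) A" using boundA[OF regA reg cof nC] .
  have "\<forall>f\<in>{f\<in>F. fst (p f) = c}. snd (p f) \<in> A" using p by blast
  from pigeon[OF reg c(2) this nA] obtain a where a: "a \<in> A"
    "same_card {f\<in>{f\<in>F. fst (p f) = c}. snd (p f) = a} (below l)" by blast
  let ?G = "{f\<in>{f\<in>F. fst (p f) = c}. snd (p f) = a}"
  have "\<forall>f\<in>?G. \<forall>x\<in>A. a \<le> x \<longrightarrow> f x < c x"
  proof (intro ballI impI)
    fix f x assume "f \<in> ?G" "x \<in> A" "a \<le> x"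
    hence "c x \<le> f x \<longrightarrow> x < a" using p by blast
    thus "f x < c x" using \<open>a \<le> x\<close> by (meson not_le)
  qed
  moreover have "c \<in> prodA A" using c(1) cof unfolding cofinal_mod_bd_def by blast
  ultimately show ?thesis using a by (intro exI[of _ ?G] exI[of _ c] exI[of _ a]) auto
qed

lemma part2:
  fixes l :: "'k::wellorder" and A :: "'k set"
  assumes regA: "\<forall>a\<in>A. regular a" and l: "l \<in> spec_star A"
  shows "le_cf_bd l A"
  unfolding le_cf_bd_def
proof (intro allI impI)
  fix C assume cof: "cofinal_mod_bd A C"
  show "card_le (below l) C"
  proof (rule ccontr)
    assume nC: "\<not> card_le (below l) C"
    from l obtain F where reg: "regular l" and F: "F \<subseteq> prodA A" "same_card F (below l)"
      and nb: "\<forall>F0 \<subseteq> F. same_card F0 (below l) \<longrightarrow> \<not> bdd_in A (ub A F0)"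
      unfolding spec_star_def by blast
    from get_G[OF regA reg F(2) F(1) cof nC] obtain G c a where
      G: "G \<subseteq> F" "same_card G (below l)" "c \<in> prodA A" "a \<in> A"
         "\<forall>f\<in>G. \<forall>x\<in>A. a \<le> x \<longrightarrow> f x < c x" by blast
    have "\<forall>x\<in>ub A G. x < a"
    proof
      fix x assume x: "x \<in> ub A G"
      show "x < a"
      proof (rule ccontr)
        assume "\<not> x < a" hence ax: "a \<le> x" by simp
        have xA: "x \<in> A" using x unfolding ub_def by blast
        have "c x < x" using G(3) xA unfolding prodA_def below_def by auto
        then obtain f where "f \<in> G" "c x \<le> f x" using x unfolding ub_def by blast
        moreover have "f x < c x" using G(5) \<open>f \<in> G\<close> xA ax by blast
        ultimately show False by simp
      qed
    qed
    hence "bdd_in A (ub A G)" using G(4) unfolding bdd_in_def by blast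
    thus False using nb G(1,2) by blast
  qed
qed

lemma part1:
  fixes l :: "'k::wellorder" and A :: "'k set"
  assumes regA: "\<forall>a\<in>A. regular a" and l: "l \<in> spec A"
  shows "le_cf_bd l A \<or> (\<exists>B. proper_initial_segment B A \<and> l \<in> spec B)"
proof (cases "le_cf_bd l A")
  case True then show ?thesis by blast
next
  case False
  then obtain C where cof: "cofinal_mod_bd A C" and nC: "\<not> card_le (below l) C"
    unfolding le_cf_bd_def by blast
  from l obtain F where reg: "regular l" and F: "F \<subseteq> prodA A" "same_card F (below l)"
    and nb: "\<forall>G \<subseteq> F. same_card G (below l) \<longrightarrow> \<not> bounded_in_prod A G"
    unfolding spec_def by blast
  from get_G[OF regA reg F(2) F(1) cof nC] obtain G c a where
    G: "G \<subseteq> F" "same_card G (below l)" "c \<in> prodA A" "a \<in> A"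
       "\<forall>f\<in>G. \<forall>x\<in>A. a \<le> x \<longrightarrow> f x < c x" by blast
  define B where "B = {x\<in>A. x < a}"
  have BA: "B \<subseteq> A" unfolding B_def by blast
  have pis: "proper_initial_segment B A"
    unfolding proper_initial_segment_def B_def using G(4) by auto
  have K: "\<not> (\<exists>g\<in>prodA B. \<forall>f\<in>H. \<forall>b\<in>B. f b < g b)"
    if H: "H \<subseteq> G" "same_card H (below l)" for H
  proof
    assume "\<exists>g\<in>prodA B. \<forall>f\<in>H. \<forall>b\<in>B. f b < g b"
    then obtain g where g: "g \<in> prodA B" "\<forall>f\<in>H. \<forall>b\<in>B. f b < g b" by blast
    define g' where "g' = restrict (\<lambda>x. if x \<in> B then g x else c x) A"
    have "g' \<in> prodA A"
      using g(1) G(3) BA unfolding g'_def prodA_def by (auto simp: PiE_iff)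
    moreover have "\<forall>f\<in>H. \<forall>x\<in>A. f x < g' x"
    proof (intro ballI)
      fix f x assume "f \<in> H" "x \<in> A"
      show "f x < g' x"
      proof (cases "x \<in> B")
        case True then show ?thesis using g(2) \<open>f \<in> H\<close> \<open>x \<in> A\<close> unfolding g'_def by simp
      next
        case False
        hence "a \<le> x" using \<open>x \<in> A\<close> unfolding B_def by auto
        then show ?thesis using G(5) \<open>f \<in> H\<close> H(1) \<open>x \<in> A\<close> False unfolding g'_def by auto
      qed
    qed
    ultimately have "bounded_in_prod A H" unfolding bounded_in_prod_def by blast
    thus False using nb H G(1) by blast
  qed
  define r where "r = (\<lambda>f::'k\<Rightarrow>'k. restrict f B)"
  have rB: "r f \<in> prodA B" if "f \<in> G" for f
    using that G(1) F(1) BA unfolding r_def prodA_def by (auto simp: PiE_iff)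
  have F'B: "r ` G \<subseteq> prodA B" using rB by blast
  have "card_le (below l) (r ` G)"
  proof (rule ccontr)
    assume n: "\<not> card_le (below l) (r ` G)"
    have "\<forall>f\<in>G. r f \<in> r ` G" by blast
    from pigeon[OF reg G(2) this n] obtain f0 where f0: "f0 \<in> r ` G"
      "same_card {f\<in>G. r f = f0} (below l)" by blast
    have f0B: "f0 \<in> prodA B" using f0(1) F'B by blast
    have ex: "\<exists>y. f0 x < y \<and> y < x" if "x \<in> B" for x
    proof -
      have "f0 x < x" using f0B that unfolding prodA_def below_def by auto
      moreover have "regular x" using regA BA that by blast
      ultimately show ?thesis using regular_limit by blast
    qed
    define g where "g = restrict (\<lambda>x. SOME y. f0 x < y \<and> y < x) B"
    have gp: "f0 x < g x \<and> g x < x" if "x \<in> B" for x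
      using someI_ex[OF ex[OF that]] that unfolding g_def by simp
    have "g \<in> prodA B" using gp unfolding prodA_def g_def by (auto simp: PiE_iff below_def)
    moreover have "\<forall>f\<in>{f\<in>G. r f = f0}. \<forall>b\<in>B. f b < g b"
    proof (intro ballI)
      fix f b assume "f \<in> {f\<in>G. r f = f0}" "b \<in> B"
      hence "f b = f0 b" unfolding r_def by auto
      thus "f b < g b" using gp \<open>b \<in> B\<close> by simp
    qed
    ultimately show False using K[of "{f\<in>G. r f = f0}"] f0(2) by blast
  qed
  moreover have "card_le (r ` G) (below l)" using cl_trans[OF cl_image sc_cl1[OF G(2)]] .
  ultimately have scF': "same_card (r ` G) (below l)" by (rule cl_SB[rotated])
  have "l \<in> spec B"
    unfolding spec_def
  proof (intro CollectI conjI exI[of _ "r ` G"])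
    show "regular l" by (rule reg)
    show "r ` G \<subseteq> prodA B" by (rule F'B)
    show "same_card (r ` G) (below l)" by (rule scF')
    show "\<forall>G'\<subseteq>r ` G. same_card G' (below l) \<longrightarrow> \<not> bounded_in_prod B G'"
    proof (intro allI impI notI)
      fix G' assume G': "G' \<subseteq> r ` G" "same_card G' (below l)" "bounded_in_prod B G'"
      then obtain g where g: "g \<in> prodA B" "\<forall>f\<in>G'. \<forall>b\<in>B. f b < g b"
        unfolding bounded_in_prod_def by blast
      let ?H = "inv_into G r ` G'"
      have HG: "?H \<subseteq> G" using G'(1) by (auto intro: inv_into_into)
      have "bij_betw (inv_into G r) G' ?H"
        using inj_on_inv_into[OF G'(1)] unfolding bij_betw_def by blast
      hence "same_card G' ?H" unfolding same_card_def by blast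
      hence scH: "same_card ?H (below l)" using sc_trans[OF sc_sym G'(2)] by blast
      have "\<forall>f\<in>?H. \<forall>b\<in>B. f b < g b"
      proof (intro ballI)
        fix f b assume "f \<in> ?H" "b \<in> B"
        then obtain f' where f': "f' \<in> G'" "f = inv_into G r f'" by blast
        have "r f = f'" using f' G'(1) f_inv_into_f by (metis subsetD)
        hence "f b = f' b" using \<open>b \<in> B\<close> unfolding r_def by auto
        thus "f b < g b" using g(2) f'(1) \<open>b \<in> B\<close> by simp
      qed
      thus False using K[OF HG scH] g(1) by blast
    qed
  qed
  thus ?thesis using pis by blast
qed

theorem proposition5p11:
  fixes A :: "'k::wellorder set" and l :: 'k
  assumes "\<forall>a\<in>A. regular a"
  shows "(l \<in> spec A \<longrightarrow>
            le_cf_bd l A \<or> (\<exists>B. proper_initial_segment B A \<and> l \<in> spec B))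
       \<and> (l \<in> spec_star A \<longrightarrow> le_cf_bd l A)"
  using part1[OF assms] part2[OF assms] by blast

end
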